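(* Let $p\ne 2,5$ be a prime and let $\sum_{i=0}^\infty a_it^i\in\mathbb{C}_p[[t]]$ be a power series with integral coefficients ($v(a_i)\ge 0$ for all $i$). Let $f(t)=\sum_{i=0}^\infty\frac{a_i}{i+1}t^{i+1}$. If $v(a_0)=0$, then $\mathrm{New}_1(f)=\emptyset$ and $\mathrm{New}_{1/2}(f)\subset[1,3]$. If $v(a_1)=0$ or $v(a_2)=0$, then $\mathrm{New}_1(f)\subset[1,3]$ and $\mathrm{New}_{1/2}(f)\subset[1,3]$.
   Context: $\mathbb{C}_p$ is the completion of $\overline{\mathbb{Q}_p}$ with valuation $v$, $v(p)=1$, $v(0)=\infty$. For a positive rational $m$ and a power series $F(t)=\sum_{u\ge0}c_ut^u$, the Newton polygon $\mathrm{New}_m(F)\subset\mathbb{R}$ is the convex hull of the set of $u\in\mathbb{Z}_{\ge0}$ for which there exists $w\in\mathbb{Q}$ with $w\ge m$ such that $v(c_u)+wu=v(c_{u'})+wu'$ for some $u'\ne u$ and $v(c_u)+wu\le v(c_{u''})+wu''$ for all $u''\in\mathbb{Z}_{\ge0}$. *)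

theory Defs
  imports "HOL-Analysis.Analysis"
begin

text \<open>An abstract stand-in for (C_p, v): a field of characteristic 0 with a
  rank-one valuation v into Q \<union> {\<infinity>} (ereal), normalised by v(p) = 1.
  C_p with its valuation is an instance.\<close>
definition p_valuation :: "nat \<Rightarrow> ('a::field_char_0 \<Rightarrow> ereal) \<Rightarrow> bool" where
  "p_valuation p v \<longleftrightarrow>
     (\<forall>x. v x = \<infinity> \<longleftrightarrow> x = 0) \<and>
     (\<forall>x. x \<noteq> 0 \<longrightarrow> (\<exists>r::rat. v x = ereal (real_of_rat r))) \<and>
     (\<forall>x y. v (x * y) = v x + v y) \<and>
     (\<forall>x y. min (v x) (v y) \<le> v (x + y)) \<and>
     v (of_nat p) = 1"

definition newton_polygon :: "('a \<Rightarrow> ereal) \<Rightarrow> rat \<Rightarrow> (nat \<Rightarrow> 'a) \<Rightarrow> real set" where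
  "newton_polygon v m c = convex hull (real ` {u::nat. \<exists>w::rat. w \<ge> m \<and>
      (\<exists>u'. u' \<noteq> u \<and>
         v (c u) + ereal (real_of_rat w * real u) = v (c u') + ereal (real_of_rat w * real u')) \<and>
      (\<forall>u''. v (c u) + ereal (real_of_rat w * real u) \<le> v (c u'') + ereal (real_of_rat w * real u''))})"

definition integrate_coeffs :: "(nat \<Rightarrow> 'a::field) \<Rightarrow> nat \<Rightarrow> 'a" where
  "integrate_coeffs a u = (if u = 0 then 0 else a (u - 1) / of_nat u)"

end

theory Submission imports Defs begin

context
  fixes p :: nat and v :: "'a::field_char_0 \<Rightarrow> ereal"
  assumes pv: "p_valuation p v"
begin

lemma pv_mult: "v (x*y) = v x + v y" using pv by (simp add: p_valuation_def)
lemma pv_add: "min (v x) (v y) \<le> v (x+y)" using pv by (simp add: p_valuation_def)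
lemma pv_zero: "v 0 = \<infinity>" using pv by (simp add: p_valuation_def)
lemma pv_fin: "x \<noteq> 0 \<Longrightarrow> \<exists>r::real. v x = ereal r"
  using pv unfolding p_valuation_def by blast
lemma pv_p: "v (of_nat p) = 1" using pv by (simp add: p_valuation_def)

lemma pv_one: "v 1 = 0"
proof -
  obtain r where r: "v 1 = ereal r" using pv_fin[of 1] by auto
  have "v (1*1) = v 1 + v 1" by (rule pv_mult)
  then show ?thesis using r by simp
qed

lemma pv_m1: "v (-1) = 0"
proof -
  obtain r where r: "v (-1) = ereal r" using pv_fin[of "-1"] by auto
  have "v ((-1)*(-1)) = v (-1) + v (-1)" by (rule pv_mult)
  then show ?thesis using r pv_one by simp
qed

lemma pv_neg: "v (-x) = v x"
  using pv_mult[of "-1" x] pv_m1 by simp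

lemma pv_nat_nonneg: "v (of_nat n) \<ge> 0"
proof (induction n)
  case 0 then show ?case using pv_zero by simp
next
  case (Suc n)
  have "min (v 1) (v (of_nat n)) \<le> v (1 + of_nat n)" by (rule pv_add)
  then show ?case using Suc pv_one by (simp add: min_def split: if_splits)
qed

lemma pv_int_nonneg: "v (of_int z) \<ge> 0"
proof (cases "z \<ge> 0")
  case True
  then have "(of_int z :: 'a) = of_nat (nat z)" by simp
  then show ?thesis using pv_nat_nonneg[of "nat z"] by simp
next
  case False
  then have "(of_int (-z) :: 'a) = of_nat (nat (-z))" by simp
  then have "(of_int z :: 'a) = - of_nat (nat (-z))" by (metis minus_minus of_int_minus)
  then show ?thesis using pv_nat_nonneg[of "nat (-z)"] pv_neg[of "of_nat (nat (-z))"] by simp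
qed

lemma pv_coprime:
  assumes "prime p" "\<not> p dvd m"
  shows "v (of_nat m) = 0"
proof (rule ccontr)
  assume ne: "v (of_nat m) \<noteq> 0"
  have m0: "m \<noteq> 0" using assms by (metis dvd_0_right)
  have pos: "v (of_nat m) > 0" using ne pv_nat_nonneg[of m] by auto
  have "coprime (int p) (int m)" using assms
    by (simp add: prime_imp_coprime)
  then have "gcd (int p) (int m) = 1" by simp
  then obtain x y where xy: "x * int p + y * int m = 1" using bezout_int[of "int p" "int m"] by auto
  then have "of_int (x * int p + y * int m) = (1::'a)" by simp
  then have "(of_int x * of_nat p + of_int y * of_nat m :: 'a) = 1" by simp
  then have mle: "min (v (of_int x * of_nat p)) (v (of_int y * of_nat m)) \<le> v 1"
    using pv_add[of "of_int x * of_nat p" "of_int y * of_nat m"] by simp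
  have h1: "v (of_int x * of_nat p) > 0"
    using pv_mult[of "of_int x" "of_nat p"] pv_p pv_int_nonneg[of x]
    by (simp add: add_nonneg_pos)
  have h2: "v (of_int y * of_nat m) > 0"
    using pv_mult[of "of_int y" "of_nat m"] pos pv_int_nonneg[of y]
    by (simp add: add_nonneg_pos)
  have mp: "0 < min (v (of_int x * of_nat p)) (v (of_int y * of_nat m))" using h1 h2 by simp
  have m0: "min (v (of_int x * of_nat p)) (v (of_int y * of_nat m)) \<le> 0" using mle pv_one by simp
  show False using less_le_trans[OF mp m0] by simp
qed

lemma pv_nat_mult: "v (of_nat (x*y)) = v (of_nat x) + v (of_nat y)"
  using pv_mult by simp

lemma pv_nat_val:
  assumes "prime p" "n > 0"
  shows "\<exists>k. v (of_nat n) = ereal (real k) \<and> p^k dvd n"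
  using assms(2)
proof (induction n rule: less_induct)
  case (less n)
  show ?case
  proof (cases "p dvd n")
    case False
    then show ?thesis using pv_coprime[OF assms(1)] by (intro exI[of _ 0]) simp
  next
    case True
    then obtain n' where n: "n = p * n'" by auto
    have p2: "p \<ge> 2" using assms(1) prime_ge_2_nat by auto
    have "n' > 0" using less.prems n by auto
    moreover have "n' < n" using n p2 \<open>n' > 0\<close> by simp
    ultimately obtain k where k: "v (of_nat n') = ereal (real k)" "p^k dvd n'" using less.IH by blast
    have "v (of_nat n) = ereal (real (Suc k))"
      using n pv_nat_mult[of p n'] pv_p k by simp
    moreover have "p^(Suc k) dvd n" using n k by simp
    ultimately show ?thesis by blast
  qed
qed

end

lemma pow3_bound: "k \<ge> 2 \<Longrightarrow> 2*k+4 \<le> (3::nat)^k"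
proof (induction k rule: dec_induct)
  case base then show ?case by simp
next
  case (step n) then show ?case by simp
qed

lemma arith_bound:
  assumes "prime p" "p \<noteq> 2" "p \<noteq> 5" "u \<ge> 4" "p^k dvd u"
  shows "2*k+3 < u"
proof -
  have p3: "p \<ge> 3" using assms(1,2) prime_ge_2_nat[of p] by linarith
  have u0: "u > 0" using assms by simp
  have pku: "p^k \<le> u" using assms(5) u0 by (simp add: dvd_imp_le)
  consider "k = 0" | "k = 1" | "k \<ge> 2" by linarith
  then show ?thesis
  proof cases
    case 1 then show ?thesis using assms by simp
  next
    case 2
    then have pu: "p dvd u" using assms by simp
    show ?thesis
    proof (cases "p = 3")
      case True
      then obtain m where m: "u = 3*m" using pu by auto
      have "5 < u" using m assms(4) by presburger
      then show ?thesis using 2 by simp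
    next
      case False
      have "\<forall>m. m dvd p \<longrightarrow> m = 1 \<or> m = p" using assms(1) prime_nat_iff by blast
      then have "2 dvd p \<longrightarrow> (2::nat) = 1 \<or> 2 = p" by blast
      then have "\<not> 2 dvd p" using assms(2) by auto
      then have "p \<noteq> 4" "p \<noteq> 6" by auto
      then have "p \<ge> 7" using p3 False assms(3) \<open>p \<noteq> 4\<close> by linarith
      then show ?thesis using pku 2 by simp
    qed
  next
    case 3
    have "3^k \<le> p^k" using p3 by (simp add: power_mono)
    then show ?thesis using pow3_bound[OF 3] pku by linarith
  qed
qed

theorem lemma6p2:
  fixes p :: nat and v :: "'a::field_char_0 \<Rightarrow> ereal" and a :: "nat \<Rightarrow> 'a"
  assumes "prime p" and "p \<noteq> 2" and "p \<noteq> 5"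
    and "p_valuation p v"
    and "\<forall>i. v (a i) \<ge> 0"
  shows "(v (a 0) = 0 \<longrightarrow>
            newton_polygon v 1 (integrate_coeffs a) = {} \<and>
            newton_polygon v (1/2) (integrate_coeffs a) \<subseteq> {1..3})
       \<and> ((v (a 1) = 0 \<or> v (a 2) = 0) \<longrightarrow>
            newton_polygon v 1 (integrate_coeffs a) \<subseteq> {1..3} \<and>
            newton_polygon v (1/2) (integrate_coeffs a) \<subseteq> {1..3})"
proof -
  note pv = assms(4)
  have p3: "p \<ge> 3" using assms(1,2) prime_ge_2_nat[of p] by linarith
  define c where "c = integrate_coeffs a"
  define K where "K n = (SOME k. v (of_nat n) = ereal (real k) \<and> p^k dvd n)" for n
  have K: "v (of_nat n) = ereal (real (K n)) \<and> p^(K n) dvd n" if "n > 0" for n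
    unfolding K_def by (rule someI_ex) (rule pv_nat_val[OF pv assms(1) that])
  have Kb: "2*K u + 3 < u" if "u \<ge> 4" for u
    using arith_bound[OF assms(1-3) that] K[of u] that by auto
  have K2: "K 2 = 0"
  proof (rule ccontr)
    assume "K 2 \<noteq> 0"
    then have "p^1 \<le> p^(K 2)" using p3 by (intro power_increasing) auto
    moreover have "p^(K 2) \<le> 2" using K[of 2] by (simp add: dvd_imp_le)
    ultimately show False using p3 by simp
  qed
  have K3: "K 3 \<le> 1"
  proof (rule ccontr)
    assume "\<not> K 3 \<le> 1"
    then have "p^2 \<le> p^(K 3)" using p3 by (intro power_increasing) auto
    moreover have "p^(K 3) \<le> 3" using K[of 3] by (simp add: dvd_imp_le)
    moreover have "9 \<le> p^2" using p3 power_mono[of 3 p 2] by simp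
    ultimately show False by linarith
  qed
  have c0: "v (c 0) = \<infinity>" by (simp add: c_def integrate_coeffs_def pv_zero[OF pv])
  have cv: "v (a (u-1)) = v (c u) + ereal (K u)" if "u > 0" for u
  proof -
    have "a (u-1) = c u * of_nat u" using that by (simp add: c_def integrate_coeffs_def)
    then have "v (a (u-1)) = v (c u) + v (of_nat u)" using pv_mult[OF pv, of "c u" "of_nat u"] by simp
    then show ?thesis using K[OF that] by simp
  qed
  have low: "v (c u) \<ge> ereal (- real (K u))" if "u > 0" for u
  proof -
    have "v (a (u-1)) \<ge> 0" using assms(5) by blast
    then have "0 \<le> v (c u) + ereal (K u)" using cv[OF that] by simp
    then show ?thesis by (cases "v (c u)") auto
  qed
  have c1: "v (c 1) = v (a 0)" by (simp add: c_def integrate_coeffs_def)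
  have c1': "v (c (Suc 0)) = v (a 0)" by (simp add: c_def integrate_coeffs_def)
  have c2: "v (c 2) = 0" if "v (a 1) = 0"
    using cv[of 2] that K2 by simp
  have c3: "v (c 3) = ereal (- real (K 3))" if "v (a 2) = 0"
  proof -
    have "0 = v (c 3) + ereal (K 3)" using cv[of 3] that by simp
    then show ?thesis by (cases "v (c 3)") auto
  qed
  define val where "val w u = v (c u) + ereal (w * real u)" for w u
  have vlow: "val w u \<ge> ereal (w * real u - real (K u))" if "u > 0" for w u
  proof -
    have "ereal (- real (K u)) + ereal (w * real u) \<le> val w u"
      unfolding val_def using low[OF that] by (rule add_right_mono)
    then show ?thesis by simp
  qed
  have big: "val w u > ereal w \<and> val w u > ereal (2*w) \<and> val w u > ereal (3*w - real (K 3))"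
    if w: "w \<ge> 1/2" and u: "u \<ge> 4" for w u
  proof -
    have kb: "2 * real (K u) + 3 < real u" using Kb[OF u] by linarith
    have u4: "real u \<ge> 4" using u by simp
    have "w * (real u - 3) \<ge> (1/2) * (real u - 3)" using w u4 by (intro mult_right_mono) auto
    then have r: "w * real u - real (K u) > w \<and> w * real u - real (K u) > 2*w
       \<and> w * real u - real (K u) > 3*w - real (K 3)" using kb w by (auto simp: algebra_simps)
    have L: "ereal (w * real u - real (K u)) \<le> val w u" using vlow u by simp
    have "ereal w < ereal (w * real u - real (K u))" "ereal (2*w) < ereal (w * real u - real (K u))"
      "ereal (3*w - real (K 3)) < ereal (w * real u - real (K u))" using r by simp_all
    then show ?thesis using less_le_trans[OF _ L] by blast
  qed
  have mins: "u \<in> {1,2,3}" if w: "w \<ge> 1/2" and R: "R \<in> {w, 2*w, 3*w - real (K 3)}"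
    and r: "val w r = ereal R" and m: "\<forall>u''. val w u \<le> val w u''" for w u R r
  proof -
    have "u \<noteq> 0"
    proof
      assume "u = 0"
      then have "val w u = \<infinity>" by (simp add: val_def c0)
      then show False using m[rule_format, of r] r by simp
    qed
    moreover have "\<not> u \<ge> 4"
    proof
      assume "u \<ge> 4"
      then have "val w u > ereal R" using big[OF w] R by auto
      then show False using m[rule_format, of r] r by simp
    qed
    ultimately show ?thesis by auto
  qed
  have strict1: "val w u > val w 1" if w: "w \<ge> 1" and a0: "v (a 0) = 0" and u: "u \<noteq> 1" for w u
  proof -
    have v1: "val w 1 = ereal w" by (simp add: val_def c1 c1' a0)
    consider "u = 0" | "u = 2" | "u = 3" | "u \<ge> 4" using u by linarith
    then show ?thesis
    proof cases
      case 1
      have "val w 0 = \<infinity>" by (simp add: val_def c0)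
      then show ?thesis using 1 v1 by simp
    next
      case 2
      have A: "val w u \<ge> ereal (w * 2 - 0)" using vlow[of u w] 2 K2 by simp
      have B: "ereal w < ereal (w * 2 - 0)" using w by simp
      show ?thesis using v1 less_le_trans[OF B A] by simp
    next
      case 3
      have A: "val w u \<ge> ereal (w * 3 - real (K 3))" using vlow[of u w] 3 by simp
      have "w * 3 - real (K 3) > w" using w K3 by linarith
      then have B: "ereal w < ereal (w * 3 - real (K 3))" by simp
      show ?thesis using v1 less_le_trans[OF B A] by simp
    next
      case 4
      then show ?thesis using big[of w u] w v1 by simp
    qed
  qed
  have sub: "newton_polygon v m c \<subseteq> {1..3}"
    if m: "m \<ge> 1/2" and ref: "\<And>w::real. w \<ge> 1/2 \<Longrightarrow> \<exists>r R. R \<in> {w, 2*w, 3*w - real (K 3)} \<and> val w r = ereal R"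
    for m :: rat
    unfolding newton_polygon_def
  proof (rule hull_minimal)
    show "convex {1..3::real}" by (rule convex_real_interval)
    show "real ` {u. \<exists>w\<ge>m. (\<exists>u'. u' \<noteq> u \<and> v (c u) + ereal (real_of_rat w * real u) =
           v (c u') + ereal (real_of_rat w * real u')) \<and>
           (\<forall>u''. v (c u) + ereal (real_of_rat w * real u) \<le> v (c u'') + ereal (real_of_rat w * real u''))}
          \<subseteq> {1..3}"
    proof
      fix x assume "x \<in> real ` {u. \<exists>w\<ge>m. (\<exists>u'. u' \<noteq> u \<and> v (c u) + ereal (real_of_rat w * real u) =
           v (c u') + ereal (real_of_rat w * real u')) \<and>
           (\<forall>u''. v (c u) + ereal (real_of_rat w * real u) \<le> v (c u'') + ereal (real_of_rat w * real u''))}"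
      then obtain u where x: "x = real u" and uS: "u \<in> {u. \<exists>w\<ge>m. (\<exists>u'. u' \<noteq> u \<and> v (c u) + ereal (real_of_rat w * real u) =
           v (c u') + ereal (real_of_rat w * real u')) \<and>
           (\<forall>u''. v (c u) + ereal (real_of_rat w * real u) \<le> v (c u'') + ereal (real_of_rat w * real u''))}"
        by (rule imageE)
      from uS obtain w where wm: "w \<ge> m"
        and mn0: "\<forall>u''. v (c u) + ereal (real_of_rat w * real u) \<le> v (c u'') + ereal (real_of_rat w * real u'')"
        by blast
      have mn: "\<forall>u''. val (real_of_rat w) u \<le> val (real_of_rat w) u''"
        using mn0 by (simp add: val_def)
      have "(1/2::rat) \<le> w" using wm m by simp
      then have "real_of_rat (1/2) \<le> real_of_rat w" by (simp only: of_rat_less_eq)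
      then have w2: "real_of_rat w \<ge> 1/2" by (simp add: of_rat_divide)
      obtain r R where R: "R \<in> {real_of_rat w, 2*real_of_rat w, 3*real_of_rat w - real (K 3)}"
        and r: "val (real_of_rat w) r = ereal R" using ref[OF w2] by blast
      have "u \<in> {1,2,3}" by (rule mins[OF w2 R r mn])
      then show "x \<in> {1..3}" using x by auto
    qed
  qed
  have empty: "newton_polygon v 1 c = {}" if a0: "v (a 0) = 0"
  proof -
    have "{u. \<exists>w\<ge>1. (\<exists>u'. u' \<noteq> u \<and> v (c u) + ereal (real_of_rat w * real u) =
           v (c u') + ereal (real_of_rat w * real u')) \<and>
           (\<forall>u''. v (c u) + ereal (real_of_rat w * real u) \<le> v (c u'') + ereal (real_of_rat w * real u''))} = {}"
    proof (rule ccontr)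
      assume "\<not> ?thesis"
      then obtain u where "u \<in> {u. \<exists>w\<ge>1. (\<exists>u'. u' \<noteq> u \<and> v (c u) + ereal (real_of_rat w * real u) =
           v (c u') + ereal (real_of_rat w * real u')) \<and>
           (\<forall>u''. v (c u) + ereal (real_of_rat w * real u) \<le> v (c u'') + ereal (real_of_rat w * real u''))}"
        by blast
      then obtain w u' where w1: "w \<ge> 1" and u': "u' \<noteq> u"
        and eq0: "v (c u) + ereal (real_of_rat w * real u) = v (c u') + ereal (real_of_rat w * real u')"
        and mn0: "\<forall>u''. v (c u) + ereal (real_of_rat w * real u) \<le> v (c u'') + ereal (real_of_rat w * real u'')"
        by blast
      have eq: "val (real_of_rat w) u = val (real_of_rat w) u'" using eq0 by (simp add: val_def)
      have mn: "\<forall>u''. val (real_of_rat w) u \<le> val (real_of_rat w) u''" using mn0 by (simp add: val_def)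
      have "real_of_rat 1 \<le> real_of_rat w" using w1 by (simp only: of_rat_less_eq)
      then have w: "real_of_rat w \<ge> 1" by simp
      show False
      proof (cases "u = 1")
        case True
        then have "u' \<noteq> 1" using u' by simp
        then show False using strict1[OF w a0 \<open>u' \<noteq> 1\<close>] eq True by simp
      next
        case False
        then show False using strict1[OF w a0 False] mn[rule_format, of 1] by simp
      qed
    qed
    then show ?thesis unfolding newton_polygon_def by simp
  qed
  have ref1: "\<exists>r R. R \<in> {w, 2*w, 3*w - real (K 3)} \<and> val w r = ereal R" if "v (a 0) = 0" for w
    by (rule exI[of _ 1], rule exI[of _ w]) (simp add: val_def c1 c1' that)
  have ref2: "\<exists>r R. R \<in> {w, 2*w, 3*w - real (K 3)} \<and> val w r = ereal R"
    if "v (a 1) = 0 \<or> v (a 2) = 0" for w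
  proof (cases "v (a 1) = 0")
    case True
    then show ?thesis by (intro exI[of _ 2] exI[of _ "2*w"]) (simp add: val_def c2 mult.commute)
  next
    case False
    then have "v (a 2) = 0" using that by simp
    then show ?thesis by (intro exI[of _ 3] exI[of _ "3*w - real (K 3)"]) (simp add: val_def c3 mult.commute)
  qed
  have A: "v (a 0) = 0 \<longrightarrow>
            newton_polygon v 1 c = {} \<and> newton_polygon v (1/2) c \<subseteq> {1..3}"
  proof
    assume a0: "v (a 0) = 0"
    show "newton_polygon v 1 c = {} \<and> newton_polygon v (1/2) c \<subseteq> {1..3}"
      using empty[OF a0] sub[of "1/2", OF _ ref1[OF a0]] by simp
  qed
  have B: "(v (a 1) = 0 \<or> v (a 2) = 0) \<longrightarrow>
            newton_polygon v 1 c \<subseteq> {1..3} \<and> newton_polygon v (1/2) c \<subseteq> {1..3}"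
  proof
    assume h: "v (a 1) = 0 \<or> v (a 2) = 0"
    show "newton_polygon v 1 c \<subseteq> {1..3} \<and> newton_polygon v (1/2) c \<subseteq> {1..3}"
      using sub[of 1, OF _ ref2[OF h]] sub[of "1/2", OF _ ref2[OF h]] by simp
  qed
  show ?thesis using A B unfolding c_def by blast
qed

end
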